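(* Let $\Gamma$ be a simple closed curve in $S^2_\infty(\mathbf{H}^3)$ and let $\Sigma$ be an embedded least area plane in $\mathbf{H}^3$ with $\partial_\infty\Sigma=\Gamma$. Fix a point $0\in\Sigma$ and for $r>0$ let $B_r(0)$ be the closed (extrinsic) hyperbolic ball of radius $r$ centered at $0$. If $\Sigma$ is not proper, then there exists $r_0>0$ such that for every generic $r>r_0$, the intersection $B_r(0)\cap\Sigma$ contains infinitely many pairwise disjoint disks.
   Context: A least area disk is a disk of smallest area among all disks with the same boundary; a least area plane is a plane every compact subdisk of which is a least area disk. $\Sigma$ is proper if the preimage of every compact subset of $\mathbf{H}^3$ under the embedding is compact. $\partial_\infty\Sigma$ is the set of limit points of $\Sigma$ in the sphere at infinity $S^2_\infty(\mathbf{H}^3)$. A radius $r>0$ is called generic if $B_r(0)\cap\Sigma$ is a disjoint union of (closed) disks; this holds for almost every $r>0$. *)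

theory Defs
  imports "HOL-Analysis.Analysis"
begin

text \<open>Hyperbolic 3-space in the Poincare ball model: the open unit ball of real^3.\<close>

definition H3 :: "(real^3) set" where
  "H3 = ball 0 1"

definition hdist :: "real^3 \<Rightarrow> real^3 \<Rightarrow> real" where
  "hdist x y = arcosh (1 + 2 * (norm (x - y))\<^sup>2 / ((1 - (norm x)\<^sup>2) * (1 - (norm y)\<^sup>2)))"

definition S2inf :: "(real^3) set" where
  "S2inf = sphere 0 1"

definition hball :: "real^3 \<Rightarrow> real \<Rightarrow> (real^3) set" where
  "hball p r = {x \<in> H3. hdist p x \<le> r}"

definition hdiam :: "(real^3) set \<Rightarrow> ennreal" where
  "hdiam C = (SUP x\<in>C. SUP y\<in>C. ennreal (hdist x y))"

text \<open>Two-dimensional Hausdorff measure with respect to the hyperbolic metric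
  (normalised so that it agrees with area: factor pi/4).\<close>
definition hausdorff2_pre :: "real \<Rightarrow> (real^3) set \<Rightarrow> ennreal" where
  "hausdorff2_pre \<delta> A =
     (INF c\<in>{c :: nat \<Rightarrow> (real^3) set. A \<subseteq> (\<Union>i. c i) \<and> (\<forall>i. c i \<subseteq> H3 \<and> hdiam (c i) \<le> ennreal \<delta>)}.
        (\<Sum>i. (hdiam (c i))\<^sup>2))"

definition harea :: "(real^3) set \<Rightarrow> ennreal" where
  "harea A = ennreal (pi / 4) * (SUP \<delta>\<in>{0<..}. hausdorff2_pre \<delta> A)"

definition disk_with_boundary :: "(real^3) set \<Rightarrow> (real^3) set \<Rightarrow> bool" where
  "disk_with_boundary D C \<longleftrightarrow> D \<subseteq> H3 \<and>
     (\<exists>h k. homeomorphism (cball (0::real^2) 1) D h k \<and> C = h ` sphere 0 1)"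

definition is_disk :: "(real^3) set \<Rightarrow> bool" where
  "is_disk D \<longleftrightarrow> (\<exists>C. disk_with_boundary D C)"

definition least_area_disk :: "(real^3) set \<Rightarrow> bool" where
  "least_area_disk D \<longleftrightarrow> (\<exists>C. disk_with_boundary D C \<and>
     (\<forall>D'. disk_with_boundary D' C \<longrightarrow> harea D \<le> harea D'))"

definition embedded_plane :: "(real^2 \<Rightarrow> real^3) \<Rightarrow> bool" where
  "embedded_plane \<phi> \<longleftrightarrow> range \<phi> \<subseteq> H3 \<and> (\<exists>\<psi>. homeomorphism UNIV (range \<phi>) \<phi> \<psi>)"

definition least_area_plane :: "(real^2 \<Rightarrow> real^3) \<Rightarrow> bool" where
  "least_area_plane \<phi> \<longleftrightarrow> embedded_plane \<phi> \<and>
     (\<forall>D. D \<subseteq> range \<phi> \<and> is_disk D \<longrightarrow> least_area_disk D)"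

definition proper_embedding :: "(real^2 \<Rightarrow> real^3) \<Rightarrow> bool" where
  "proper_embedding \<phi> \<longleftrightarrow> (\<forall>K. compact K \<and> K \<subseteq> H3 \<longrightarrow> compact (\<phi> -` K))"

definition asymptotic_boundary :: "(real^3) set \<Rightarrow> (real^3) set" where
  "asymptotic_boundary S = S2inf \<inter> closure S"

definition simple_closed_curve_at_infinity :: "(real^3) set \<Rightarrow> bool" where
  "simple_closed_curve_at_infinity \<Gamma> \<longleftrightarrow> \<Gamma> \<subseteq> S2inf \<and> \<Gamma> homeomorphic sphere (0::real^2) 1"

text \<open>r is generic: B_r(p) \<inter> \<Sigma> is a disjoint union of closed disks, i.e. each
  connected component is a disk.\<close>
definition generic_radius :: "real^3 \<Rightarrow> (real^3) set \<Rightarrow> real \<Rightarrow> bool" where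
  "generic_radius p S r \<longleftrightarrow> (\<forall>D\<in>components (hball p r \<inter> S). is_disk D)"

end

theory Submission
  imports Defs
begin

lemma hdist_cont:
  assumes p: "p \<in> H3" and K: "K \<subseteq> H3"
  shows "continuous_on K (\<lambda>x. hdist p x)"
proof -
  have np: "norm p < 1" using p by (simp add: H3_def)
  have pp: "(norm p)\<^sup>2 < 1" using np by (simp add: abs_square_less_1)
  have lt: "(norm x)\<^sup>2 < 1" if "x \<in> K" for x
  proof -
    have "norm x < 1" using K that by (auto simp: H3_def)
    then show ?thesis by (simp add: abs_square_less_1)
  qed
  have c1: "continuous_on K (\<lambda>x. 1 + 2 * (norm (p - x))\<^sup>2 / ((1 - (norm p)\<^sup>2) * (1 - (norm x)\<^sup>2)))"
    by (intro continuous_intros) (use lt pp in fastforce)+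
  have sub: "(\<lambda>x. 1 + 2 * (norm (p - x))\<^sup>2 / ((1 - (norm p)\<^sup>2) * (1 - (norm x)\<^sup>2))) ` K \<subseteq> {1..}"
  proof (rule image_subsetI)
    fix x assume "x \<in> K"
    then have "0 \<le> 2 * (norm (p - x))\<^sup>2 / ((1 - (norm p)\<^sup>2) * (1 - (norm x)\<^sup>2))"
      using pp lt[of x] by simp
    then show "1 + 2 * (norm (p - x))\<^sup>2 / ((1 - (norm p)\<^sup>2) * (1 - (norm x)\<^sup>2)) \<in> {1..}"
      by simp
  qed
  have "continuous_on K (\<lambda>x. arcosh (1 + 2 * (norm (p - x))\<^sup>2 / ((1 - (norm p)\<^sup>2) * (1 - (norm x)\<^sup>2))))"
    by (rule continuous_on_compose2[OF continuous_on_arcosh[OF order.refl] c1 sub])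
  then show ?thesis by (simp add: hdist_def[abs_def])
qed

lemma compact_in_hball:
  assumes p: "p \<in> H3" and K: "compact K" "K \<subseteq> H3"
  shows "\<exists>r0>0. K \<subseteq> hball p r0"
proof -
  have "compact ((\<lambda>x. hdist p x) ` K)"
    using compact_continuous_image[OF hdist_cont[OF p K(2)] K(1)] .
  then have "bounded ((\<lambda>x. hdist p x) ` K)" by (rule compact_imp_bounded)
  then obtain B where B: "\<forall>y\<in>(\<lambda>x. hdist p x) ` K. norm y \<le> B"
    unfolding bounded_iff by blast
  have hb: "hdist p x \<le> max 1 B" if "x \<in> K" for x
  proof -
    have "norm (hdist p x) \<le> B" using B that by blast
    then have "hdist p x \<le> B" by (metis abs_le_D1 real_norm_def)
    then show ?thesis by linarith
  qed
  have "K \<subseteq> hball p (max 1 B)"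
  proof
    fix x assume x: "x \<in> K"
    then show "x \<in> hball p (max 1 B)" using hb[OF x] K(2) unfolding hball_def by blast
  qed
  moreover have "(0::real) < max 1 B" by linarith
  ultimately show ?thesis by blast
qed

theorem lemma3p1:
  fixes \<Gamma> :: "(real^3) set" and \<phi> :: "real^2 \<Rightarrow> real^3" and p :: "real^3"
  assumes "simple_closed_curve_at_infinity \<Gamma>"
    and "least_area_plane \<phi>"
    and "asymptotic_boundary (range \<phi>) = \<Gamma>"
    and "p \<in> range \<phi>"
    and "\<not> proper_embedding \<phi>"
  shows "\<exists>r0>0. \<forall>r>r0. generic_radius p (range \<phi>) r \<longrightarrow>
           infinite {D \<in> components (hball p r \<inter> range \<phi>). is_disk D}"
proof -
  from assms(2) obtain \<psi> where hom: "homeomorphism UNIV (range \<phi>) \<phi> \<psi>" and rng: "range \<phi> \<subseteq> H3"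
    by (auto simp: least_area_plane_def embedded_plane_def)
  from assms(5) obtain K where K: "compact K" "K \<subseteq> H3" "\<not> compact (\<phi> -` K)"
    by (auto simp: proper_embedding_def)
  have pH: "p \<in> H3" using assms(4) rng by auto
  obtain r0 where r0: "r0 > 0" "K \<subseteq> hball p r0" using compact_in_hball[OF pH K(1,2)] by blast
  have contphi: "continuous_on UNIV \<phi>" and contpsi: "continuous_on (range \<phi>) \<psi>"
    and inv1: "\<And>x. \<psi> (\<phi> x) = x" and inv2: "\<And>y. y \<in> range \<phi> \<Longrightarrow> \<phi> (\<psi> y) = y"
    using hom by (auto simp: homeomorphism_def)
  show ?thesis
  proof (rule exI[of _ r0], intro conjI allI impI r0(1))
    fix r assume rr: "r > r0" and gen: "generic_radius p (range \<phi>) r"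
    let ?S = "hball p r \<inter> range \<phi>"
    have eq: "{D \<in> components ?S. is_disk D} = components ?S"
      using gen by (auto simp: generic_radius_def)
    show "infinite {D \<in> components ?S. is_disk D}"
    proof
      assume fin: "finite {D \<in> components ?S. is_disk D}"
      have "\<And>D. D \<in> components ?S \<Longrightarrow> compact D"
      proof -
        fix D assume "D \<in> components ?S"
        then have "is_disk D" using gen by (auto simp: generic_radius_def)
        then obtain h k where "homeomorphism (cball (0::real^2) 1) D h k"
          by (auto simp: is_disk_def disk_with_boundary_def)
        then show "compact D"
          by (metis compact_cball compact_continuous_image homeomorphism_def)
      qed
      moreover have "finite (components ?S)" using fin eq by simp
      ultimately have "compact (\<Union>(components ?S))" by (intro compact_Union)
      then have cS: "compact ?S" by (simp only: Union_components)
      have "\<psi> ` ?S = \<phi> -` ?S"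
      proof
        show "\<psi> ` ?S \<subseteq> \<phi> -` ?S"
        proof
          fix x assume "x \<in> \<psi> ` ?S"
          then obtain y where y: "y \<in> ?S" "x = \<psi> y" by blast
          then have "\<phi> x = y" using inv2 by blast
          then show "x \<in> \<phi> -` ?S" using y by blast
        qed
        show "\<phi> -` ?S \<subseteq> \<psi> ` ?S"
        proof
          fix x assume "x \<in> \<phi> -` ?S"
          then show "x \<in> \<psi> ` ?S" using inv1[of x] by (metis imageI vimageE)
        qed
      qed
      moreover have "compact (\<psi> ` ?S)"
        by (rule compact_continuous_image[OF continuous_on_subset[OF contpsi] cS]) auto
      ultimately have c2: "compact (\<phi> -` ?S)" by simp
      have "K \<subseteq> hball p r" using r0(2) rr by (auto simp: hball_def)
      then have sub: "\<phi> -` K \<subseteq> \<phi> -` ?S" by auto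
      have cK: "closed K" by (rule compact_imp_closed[OF K(1)])
      have "closed (\<phi> -` K)"
        using continuous_closed_vimage[OF cK] contphi
        by (auto simp: continuous_on_eq_continuous_within)
      then have "compact (\<phi> -` ?S \<inter> \<phi> -` K)" by (rule compact_Int_closed[OF c2])
      moreover have "\<phi> -` ?S \<inter> \<phi> -` K = \<phi> -` K" using sub by blast
      ultimately have "compact (\<phi> -` K)" by simp
      then show False using K(3) by simp
    qed
  qed
qed

end
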